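(* Let $Y=y[0,\dots,A-1]$ and $Z=z[0,\dots,B-1]$ ($A,B\ge1$) be finite sequences with values in a totally ordered set, each regarded on a linear domain, and let $X=x[0,\dots,A+B-1]$ be the sequence obtained by gluing $Y$ and $Z$, i.e. $x[i]=y[i]$ for $i<A$ and $x[A+j]=z[j]$, with $A-1$ and $A$ made adjacent. Consider the boundary extrema at the glue point: the flat of $Y$ containing $y[A-1]$ and the flat of $Z$ containing $z[0]$. If both are local minima (respectively both are local maxima), then the number of local minima (respectively local maxima) of $X$ equals the number of local minima (respectively local maxima) of $Y$ plus that of $Z$, minus one.
   Context: For a sequence on a linear domain (index $i$ adjacent to $i+1$), a flat is a maximal run of consecutive indices with equal value $l$; its outer neighbours are the (at most two) indices adjacent to the run but not in it. A flat is a local minimum if all its existing outer neighbours have value $>l$, and a local maximum if all its existing outer neighbours have value $<l$. Flats at the ends of the domain (boundary extrema) are classified by their single outer neighbour, and a flat with no outer neighbour (a constant sequence) is counted both as a local minimum and a local maximum. The number of local minima (maxima) is the number of flats that are local minima (maxima). *)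

theory Defs
  imports Main
begin

text \<open>Sequences on a linear domain are lists; index i is adjacent to i+1.
A flat is a maximal run of consecutive indices i..j (i \<le> j) with equal value.\<close>

definition is_flat :: "'a list \<Rightarrow> nat \<Rightarrow> nat \<Rightarrow> bool" where
  "is_flat xs i j \<longleftrightarrow> i \<le> j \<and> j < length xs
     \<and> (\<forall>k. i \<le> k \<and> k \<le> j \<longrightarrow> xs ! k = xs ! i)
     \<and> (i = 0 \<or> xs ! (i - 1) \<noteq> xs ! i)
     \<and> (j + 1 = length xs \<or> xs ! (j + 1) \<noteq> xs ! i)"

text \<open>A flat is a local minimum if all its existing outer neighbours have larger value
(a flat without outer neighbours is vacuously both a minimum and a maximum).\<close>

definition flat_is_min :: "'a::linorder list \<Rightarrow> nat \<Rightarrow> nat \<Rightarrow> bool" where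
  "flat_is_min xs i j \<longleftrightarrow> is_flat xs i j
     \<and> (i = 0 \<or> xs ! (i - 1) > xs ! i)
     \<and> (j + 1 = length xs \<or> xs ! (j + 1) > xs ! i)"

definition flat_is_max :: "'a::linorder list \<Rightarrow> nat \<Rightarrow> nat \<Rightarrow> bool" where
  "flat_is_max xs i j \<longleftrightarrow> is_flat xs i j
     \<and> (i = 0 \<or> xs ! (i - 1) < xs ! i)
     \<and> (j + 1 = length xs \<or> xs ! (j + 1) < xs ! i)"

definition num_minima :: "'a::linorder list \<Rightarrow> nat" where
  "num_minima xs = card {(i, j). flat_is_min xs i j}"

definition num_maxima :: "'a::linorder list \<Rightarrow> nat" where
  "num_maxima xs = card {(i, j). flat_is_max xs i j}"

end

theory Submission
  imports Defs
begin

definition gext :: "('a \<Rightarrow> 'a \<Rightarrow> bool) \<Rightarrow> 'a list \<Rightarrow> nat \<Rightarrow> nat \<Rightarrow> bool" where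
  "gext r xs i j \<longleftrightarrow> is_flat xs i j
     \<and> (i = 0 \<or> r (xs ! (i - 1)) (xs ! i))
     \<and> (j + 1 = length xs \<or> r (xs ! (j + 1)) (xs ! i))"

lemma flat_unique_aux1:
  assumes "is_flat xs i j" "is_flat xs i' j'" "i \<le> k" "k \<le> j" "i' \<le> k" "k \<le> j'"
  shows "\<not> i < i'"
proof
  assume lt: "i < i'"
  have c1: "\<forall>k. i \<le> k \<and> k \<le> j \<longrightarrow> xs ! k = xs ! i" using assms(1) unfolding is_flat_def by blast
  have l2: "i' = 0 \<or> xs ! (i' - 1) \<noteq> xs ! i'" using assms(2) unfolding is_flat_def by blast
  have "i \<le> i' - 1 \<and> i' - 1 \<le> j" using lt assms by linarith
  then have a: "xs ! (i'-1) = xs ! i" using c1 by blast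
  have "i \<le> i' \<and> i' \<le> j" using lt assms by linarith
  then have b: "xs ! i' = xs ! i" using c1 by blast
  have "i' \<noteq> 0" using lt by linarith
  then show False using l2 a b by simp
qed

lemma flat_unique_aux2:
  assumes "is_flat xs i j" "is_flat xs i' j'" "i \<le> k" "k \<le> j" "i' \<le> k" "k \<le> j'"
  shows "\<not> j < j'"
proof
  assume lt: "j < j'"
  have c2: "\<forall>k. i' \<le> k \<and> k \<le> j' \<longrightarrow> xs ! k = xs ! i'" using assms(2) unfolding is_flat_def by blast
  have c1: "\<forall>k. i \<le> k \<and> k \<le> j \<longrightarrow> xs ! k = xs ! i" using assms(1) unfolding is_flat_def by blast
  have r1: "j + 1 = length xs \<or> xs ! (j + 1) \<noteq> xs ! i" using assms(1) unfolding is_flat_def by blast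
  have len: "j' < length xs" using assms(2) unfolding is_flat_def by blast
  have "i' \<le> j + 1 \<and> j + 1 \<le> j'" using lt assms by linarith
  then have a: "xs ! (j+1) = xs ! i'" using c2 by blast
  have "i' \<le> j \<and> j \<le> j'" using lt assms by linarith
  then have b: "xs ! j = xs ! i'" using c2 by blast
  have "i \<le> j \<and> j \<le> j" using assms by linarith
  then have c: "xs ! j = xs ! i" using c1 by blast
  have "j + 1 \<noteq> length xs" using lt len by linarith
  then show False using r1 a b c by simp
qed

lemma flat_unique:
  assumes "is_flat xs i j" "is_flat xs i' j'" "i \<le> k" "k \<le> j" "i' \<le> k" "k \<le> j'"
  shows "i = i' \<and> j = j'"
  using flat_unique_aux1[OF assms] flat_unique_aux2[OF assms]
    flat_unique_aux1[OF assms(2,1,5,6,3,4)] flat_unique_aux2[OF assms(2,1,5,6,3,4)]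
  by linarith

lemma gext_left:
  assumes "j + 1 < length ys"
  shows "gext r (ys @ zs) i j \<longleftrightarrow> gext r ys i j"
proof (cases "i \<le> j")
  case False then show ?thesis by (simp add: gext_def is_flat_def)
next
  case hij: True
  have e: "\<And>k. k \<le> j+1 \<Longrightarrow> (ys@zs)!k = ys!k" using assms by (simp add: nth_append)
  have a0: "\<And>k. i \<le> k \<and> k \<le> j \<Longrightarrow> ((ys@zs)!k = (ys@zs)!i) = (ys!k = ys!i)"
    using e hij by simp
  have a: "(\<forall>k. i \<le> k \<and> k \<le> j \<longrightarrow> (ys@zs) ! k = (ys@zs) ! i) \<longleftrightarrow> (\<forall>k. i \<le> k \<and> k \<le> j \<longrightarrow> ys ! k = ys ! i)"
    using a0 by blast
  have e1: "(ys@zs)!i = ys!i" "(ys@zs)!(i-1) = ys!(i-1)" "(ys@zs)!(j+1) = ys!(j+1)"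
    using e hij by auto
  have l: "(j < length (ys@zs)) = True" "(j < length ys) = True" "(j + 1 = length (ys@zs)) = False"
     "(j+1 = length ys) = False" using assms by auto
  show ?thesis unfolding gext_def is_flat_def a
    by (simp only: e1 l)
qed

lemma gext_right:
  assumes "0 < i"
  shows "gext r (ys @ zs) (length ys + i) (length ys + j) \<longleftrightarrow> gext r zs i j"
proof -
  have e: "\<And>k. (ys@zs)!(length ys + k) = zs!k" by (simp add: nth_append)
  have a: "(\<forall>k. length ys + i \<le> k \<and> k \<le> length ys + j \<longrightarrow> (ys@zs) ! k = (ys@zs) ! (length ys + i)) \<longleftrightarrow> (\<forall>k. i \<le> k \<and> k \<le> j \<longrightarrow> zs ! k = zs ! i)"
  proof
    assume H: "\<forall>k. length ys + i \<le> k \<and> k \<le> length ys + j \<longrightarrow> (ys@zs) ! k = (ys@zs) ! (length ys + i)"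
    show "\<forall>k. i \<le> k \<and> k \<le> j \<longrightarrow> zs ! k = zs ! i"
    proof (intro allI impI)
      fix k assume k: "i \<le> k \<and> k \<le> j"
      then have "(ys@zs)!(length ys + k) = (ys@zs)!(length ys+i)" using H[rule_format, of "length ys + k"] by simp
      then show "zs!k = zs!i" by (simp only: e)
    qed
  next
    assume H: "\<forall>k. i \<le> k \<and> k \<le> j \<longrightarrow> zs ! k = zs ! i"
    show "\<forall>k. length ys + i \<le> k \<and> k \<le> length ys + j \<longrightarrow> (ys@zs) ! k = (ys@zs) ! (length ys + i)"
    proof (intro allI impI)
      fix k assume k: "length ys + i \<le> k \<and> k \<le> length ys + j"
      have "i \<le> k - length ys \<and> k - length ys \<le> j" using k by linarith
      then have "zs!(k - length ys) = zs!i" using H by blast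
      moreover have "(ys@zs)!k = zs!(k - length ys)" using k by (simp add: nth_append)
      ultimately show "(ys@zs)!k = (ys@zs)!(length ys+i)" by (simp only: e)
    qed
  qed
  have b: "length ys + i - 1 = length ys + (i - 1)" using assms by simp
  have l: "(length ys + j < length (ys@zs)) = (j < length zs)" "(length ys + i \<le> length ys + j) = (i \<le> j)"
     "(length ys + j + 1 = length (ys@zs)) = (j + 1 = length zs)" "(length ys + i = 0) = False" "(i = 0) = False"
     "length ys + j + 1 = length ys + (j + 1)" "(length ys + (j + 1) = length (ys@zs)) = (j + 1 = length zs)"
    using assms by auto
  show ?thesis unfolding gext_def is_flat_def a
    by (simp only: b e l)
qed

lemma gext_bounds: "gext r xs i j \<Longrightarrow> i \<le> j \<and> j < length xs"
  unfolding gext_def is_flat_def by blast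

lemma gext_flat: "gext r xs i j \<Longrightarrow> is_flat xs i j"
  unfolding gext_def by blast

lemma fin_gext: "finite {(i,j). gext r xs i j}"
proof -
  have "{(i,j). gext r xs i j} \<subseteq> {..<length xs} \<times> {..<length xs}"
    by (auto dest: gext_bounds)
  then show ?thesis by (rule finite_subset) simp
qed

lemma main_gen:
  fixes r :: "'a \<Rightarrow> 'a \<Rightarrow> bool"
  assumes irr: "\<And>a. \<not> r a a" and asy: "\<And>a b. r a b \<Longrightarrow> \<not> r b a"
    and tot: "\<And>a b. a \<noteq> b \<Longrightarrow> r a b \<or> r b a"
    and A1: "length ys \<ge> 1" and B1: "length zs \<ge> 1"
    and P: "gext r ys p (length ys - 1)" and Q: "gext r zs 0 q"
  shows "card {(i,j). gext r (ys@zs) i j} = card {(i,j). gext r ys i j} + card {(i,j). gext r zs i j} - 1"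
proof -
  define A where "A = length ys"
  define B where "B = length zs"
  define X where "X = ys @ zs"
  have lX: "length X = A + B" unfolding X_def A_def B_def by simp
  have eL: "\<And>k. k < A \<Longrightarrow> X!k = ys!k" unfolding X_def A_def by (simp add: nth_append)
  have eR: "\<And>k. X!(A+k) = zs!k" unfolding X_def A_def by (simp add: nth_append)
  have eR': "\<And>k. A \<le> k \<Longrightarrow> X!k = zs!(k-A)" unfolding X_def A_def by (simp add: nth_append)
  have Pf: "is_flat ys p (A-1)" "p = 0 \<or> r (ys!(p-1)) (ys!p)" using P unfolding gext_def A_def by blast+
  have pA: "p \<le> A - 1" and pc0: "\<forall>k. p \<le> k \<and> k \<le> A - 1 \<longrightarrow> ys!k = ys!p"
    and pl: "p = 0 \<or> ys!(p-1) \<noteq> ys!p" using Pf(1) unfolding is_flat_def by blast+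
  have pc: "\<And>k. p \<le> k \<Longrightarrow> k \<le> A - 1 \<Longrightarrow> ys!k = ys!p" using pc0 by blast
  have pr: "p = 0 \<or> r (ys!(p-1)) (ys!p)" by (rule Pf(2))
  have Qf: "is_flat zs 0 q" "q + 1 = B \<or> r (zs!(q+1)) (zs!0)" using Q unfolding gext_def B_def by blast+
  have qB: "q < B" and qc0: "\<forall>k. 0 \<le> k \<and> k \<le> q \<longrightarrow> zs!k = zs!0"
    and ql: "q + 1 = B \<or> zs!(q+1) \<noteq> zs!0" using Qf(1) unfolding is_flat_def B_def by blast+
  have qc: "\<And>k. k \<le> q \<Longrightarrow> zs!k = zs!0" using qc0 by blast
  have qr: "q + 1 = B \<or> r (zs!(q+1)) (zs!0)" by (rule Qf(2))
  have yp: "ys!p = ys!(A-1)" using pc[of "A-1"] pA by simp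
  have A0: "A \<ge> 1" "B \<ge> 1" using A1 B1 A_def B_def by auto
  define S1 where "S1 = {(i,j). gext r ys i j \<and> j+1 < A}"
  define S2 where "S2 = {(i,j). gext r zs i j \<and> 0 < i}"
  define sh where "sh = (\<lambda>(i,j). (A+i, A+j::nat))"
  define M where "M = {(i,j). gext r X i j \<and> i \<le> A \<and> A \<le> j+1}"
  have SY: "{(i,j). gext r ys i j} = insert (p, A-1) S1"
  proof (rule set_eqI, clarify)
    fix i j
    show "((i,j) \<in> {(i,j). gext r ys i j}) = ((i,j) \<in> insert (p, A-1) S1)"
    proof
      assume h: "(i,j) \<in> {(i,j). gext r ys i j}"
      show "(i,j) \<in> insert (p, A-1) S1"
      proof (cases "j+1 < A")
        case True then show ?thesis using h S1_def by auto
      next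
        case False
        have h': "gext r ys i j" using h by simp
        have PA: "gext r ys p (A-1)" using P A_def by simp
        have "i \<le> j" "j < A" using gext_bounds[OF h'] A_def by auto
        then have "j = A - 1" using False by linarith
        then have "i = p" using flat_unique[OF gext_flat[OF h'] gext_flat[OF PA], of "A-1"] \<open>i \<le> j\<close> pA
          by simp
        then show ?thesis using \<open>j = A-1\<close> by simp
      qed
    next
      assume "(i,j) \<in> insert (p, A-1) S1"
      then show "(i,j) \<in> {(i,j). gext r ys i j}" using P S1_def A_def by auto
    qed
  qed
  have SY': "(p, A-1) \<notin> S1" using S1_def A0 by auto
  have SZ: "{(i,j). gext r zs i j} = insert (0, q) S2"
  proof (rule set_eqI, clarify)
    fix i j
    show "((i,j) \<in> {(i,j). gext r zs i j}) = ((i,j) \<in> insert (0, q) S2)"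
    proof
      assume h: "(i,j) \<in> {(i,j). gext r zs i j}"
      show "(i,j) \<in> insert (0, q) S2"
      proof (cases "0 < i")
        case True then show ?thesis using h S2_def by auto
      next
        case False
        have h': "gext r zs i j" using h by simp
        have "i = 0" using False by simp
        then have "j = q" using flat_unique[OF gext_flat[OF h'] gext_flat[OF Q], of 0] gext_bounds[OF h']
          by simp
        then show ?thesis using False by simp
      qed
    next
      assume "(i,j) \<in> insert (0, q) S2"
      then show "(i,j) \<in> {(i,j). gext r zs i j}" using Q S2_def by auto
    qed
  qed
  have SZ': "(0, q) \<notin> S2" using S2_def by auto
  have SX: "{(i,j). gext r X i j} = S1 \<union> sh ` S2 \<union> M"
  proof (rule set_eqI, clarify)
    fix i j
    show "((i,j) \<in> {(i,j). gext r X i j}) = ((i,j) \<in> S1 \<union> sh ` S2 \<union> M)"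
    proof
      assume h: "(i,j) \<in> {(i,j). gext r X i j}"
      show "(i,j) \<in> S1 \<union> sh ` S2 \<union> M"
      proof (cases "j+1 < A")
        case True then show ?thesis using h S1_def gext_left[of j ys r zs i] X_def A_def by auto
      next
        case F1: False
        show ?thesis
        proof (cases "A < i")
          case True
          have "i \<le> j" using h gext_bounds by auto
          have "gext r X (A + (i - A)) (A + (j - A))" using h True \<open>i \<le> j\<close> by simp
          then have "gext r zs (i - A) (j - A)" using gext_right[of "i - A" r ys zs "j - A"] True
            unfolding X_def A_def by simp
          then have "(i - A, j - A) \<in> S2" using True S2_def by simp
          moreover have "(i,j) = sh (i - A, j - A)" using True \<open>i \<le> j\<close> sh_def by simp
          ultimately show ?thesis by blast
        next
          case False then show ?thesis using F1 h M_def by auto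
        qed
      qed
    next
      assume "(i,j) \<in> S1 \<union> sh ` S2 \<union> M"
      then consider "(i,j) \<in> S1" | "(i,j) \<in> sh ` S2" | "(i,j) \<in> M" by blast
      then show "(i,j) \<in> {(i,j). gext r X i j}"
      proof cases
        case 1 then show ?thesis using S1_def gext_left[of j ys r zs i] X_def A_def by auto
      next
        case 2
        then obtain a b where ab: "(a,b) \<in> S2" "i = A + a" "j = A + b" using sh_def by auto
        then show ?thesis using S2_def gext_right[of a r ys zs b] X_def A_def by auto
      next
        case 3 then show ?thesis using M_def by auto
      qed
    qed
  qed
  have d1: "S1 \<inter> sh ` S2 = {}" using S1_def S2_def sh_def by (auto dest: gext_bounds)
  have d2: "(S1 \<union> sh ` S2) \<inter> M = {}" using S1_def S2_def sh_def M_def by auto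
  have M1: "\<exists>m. M = {m}"
  proof -
    have AX: "A < length X" using lX A0 by simp
    have x0: "X!A = zs!0" using eR[of 0] by simp
    have xa: "X!(A-1) = ys!(A-1)" using eL A0 by simp
    have xp: "X!p = ys!p" using eL pA A0 by simp
    have Mg: "gext r X i j \<and> i \<le> A \<and> A \<le> j+1" if "(i,j) \<in> M" for i j using that M_def by simp
    have Mi: "is_flat X i j" "i \<le> j" "j < length X" "\<And>k. i \<le> k \<Longrightarrow> k \<le> j \<Longrightarrow> X!k = X!i"
       "i = 0 \<or> r (X!(i-1)) (X!i)" "j+1 = length X \<or> r (X!(j+1)) (X!i)" "i \<le> A" "A \<le> j + 1"
      if "(i,j) \<in> M" for i j using Mg[OF that] unfolding gext_def is_flat_def by blast+
    consider (eq) "ys!(A-1) = zs!0" | (c1) "r (ys!(A-1)) (zs!0)" | (c2) "r (zs!0) (ys!(A-1))"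
      using tot by blast
    then show ?thesis
    proof cases
      case eq
      have fl: "is_flat X p (A+q)" unfolding is_flat_def
      proof (intro conjI allI impI)
        show "p \<le> A + q" using pA by simp
        show "A + q < length X" using lX qB by simp
        fix k assume k: "p \<le> k \<and> k \<le> A + q"
        show "X!k = X!p"
        proof (cases "k < A")
          case True then show ?thesis using eL[of k] pc[of k] k xp by simp
        next
          case False
          then have "X!k = zs!(k-A)" using eR' by simp
          also have "\<dots> = zs!0" using k by (intro qc) linarith
          finally show ?thesis using eq yp xp by simp
        qed
      next
        show "p = 0 \<or> X ! (p - 1) \<noteq> X ! p" using pl xp eL[of "p-1"] pA A0 by auto
        show "A + q + 1 = length X \<or> X ! (A + q + 1) \<noteq> X ! p"
          using ql eR[of "q+1"] lX xp yp eq B_def by (auto simp: add.assoc)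
      qed
      have g: "gext r X p (A+q)" unfolding gext_def
        using fl pr qr xp eL[of "p-1"] pA A0 eR[of "q+1"] lX yp eq by (auto simp: add.assoc)
      have "M = {(p, A+q)}"
      proof (rule set_eqI, rule iffI)
        fix x assume hx: "x \<in> M"
        obtain i j where ij: "x = (i,j)" by (cases x)
        have h: "(i,j) \<in> M" using hx ij by simp
          have "i = p \<and> j = A + q"
            using flat_unique[OF Mi(1)[OF h] fl, of "max i (A-1)"] Mi(2,7,8)[OF h] pA by auto
        then show "x \<in> {(p, A+q)}" using ij by simp
      next
        fix x assume "x \<in> {(p, A+q)}"
        then show "x \<in> M" using g M_def pA by auto
      qed
      then show ?thesis by blast
    next
      case c1
      have fl: "is_flat X A (A+q)" unfolding is_flat_def
      proof (intro conjI allI impI)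
        show "A \<le> A + q" by simp
        show "A + q < length X" using lX qB by simp
        fix k assume k: "A \<le> k \<and> k \<le> A + q"
        then have "k - A \<le> q" by linarith
        then show "X!k = X!A" using eR'[of k] qc[of "k-A"] x0 k by simp
      next
        show "A = 0 \<or> X ! (A - 1) \<noteq> X ! A" using xa x0 c1 irr by metis
        show "A + q + 1 = length X \<or> X ! (A + q + 1) \<noteq> X ! A"
          using ql eR[of "q+1"] lX x0 B_def by (auto simp: add.assoc)
      qed
      have g: "gext r X A (A+q)" unfolding gext_def
        using fl qr x0 xa c1 eR[of "q+1"] lX by (auto simp: add.assoc)
      have "M = {(A, A+q)}"
      proof (rule set_eqI, rule iffI)
        fix x assume hx: "x \<in> M"
        obtain i j where ij: "x = (i,j)" by (cases x)
        have h: "(i,j) \<in> M" using hx ij by simp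
          have iA: "i = A"
          proof (rule ccontr)
            assume "i \<noteq> A"
            then have i1: "i \<le> A - 1" using Mi(7)[OF h] by simp
            show False
            proof (cases "A \<le> j")
              case True
              then have "X!(A-1) = X!A" using Mi(4)[OF h, of "A-1"] Mi(4)[OF h, of A] i1 A0 by simp
              then show False using xa x0 c1 irr by metis
            next
              case False
              then have "j = A - 1" using Mi(8)[OF h] by simp
              then have "r (X!A) (X!i)" using Mi(6)[OF h] lX A0 by auto
              moreover have "X!i = X!(A-1)" using Mi(4)[OF h, of "A-1"] i1 \<open>j = A-1\<close> by simp
              ultimately show False using xa x0 c1 asy by metis
            qed
          qed
          have "i = A \<and> j = A + q"
            using flat_unique[OF Mi(1)[OF h] fl, of A] Mi(2,7,8)[OF h] iA by auto
        then show "x \<in> {(A, A+q)}" using ij by simp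
      next
        fix x assume "x \<in> {(A, A+q)}"
        then show "x \<in> M" using g M_def by auto
      qed
      then show ?thesis by blast
    next
      case c2
      have fl: "is_flat X p (A-1)" unfolding is_flat_def
      proof (intro conjI allI impI)
        show "p \<le> A - 1" using pA by simp
        show "A - 1 < length X" using AX by simp
        fix k assume k: "p \<le> k \<and> k \<le> A - 1"
        then have "k < A" using A0 by linarith
        then show "X!k = X!p" using eL[of k] pc[of k] xp A0 k by simp
      next
        show "p = 0 \<or> X ! (p - 1) \<noteq> X ! p" using pl xp eL[of "p-1"] pA A0 by auto
        have "X ! (A - 1 + 1) \<noteq> X ! p" using x0 xp yp c2 irr A0 by (metis le_add_diff_inverse2)
        then show "A - 1 + 1 = length X \<or> X ! (A - 1 + 1) \<noteq> X ! p" by simp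
      qed
      have g: "gext r X p (A-1)" unfolding gext_def
        using fl pr xp eL[of "p-1"] pA A0 x0 yp c2 by auto
      have "M = {(p, A-1)}"
      proof (rule set_eqI, rule iffI)
        fix x assume hx: "x \<in> M"
        obtain i j where ij: "x = (i,j)" by (cases x)
        have h: "(i,j) \<in> M" using hx ij by simp
          have i1: "i \<le> A - 1"
          proof (rule ccontr)
            assume "\<not> i \<le> A - 1"
            then have "i = A" using Mi(7)[OF h] by simp
            then have "r (X!(A-1)) (X!A)" using Mi(5)[OF h] A0 by auto
            then show False using xa x0 c2 asy by metis
          qed
          have j1: "j = A - 1"
          proof (rule ccontr)
            assume "j \<noteq> A - 1"
            then have "A \<le> j" using Mi(8)[OF h] by simp
            then have "X!(A-1) = X!A" using Mi(4)[OF h, of "A-1"] Mi(4)[OF h, of A] i1 A0 by simp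
            then show False using xa x0 c2 irr by metis
          qed
          have "i = p \<and> j = A - 1"
            using flat_unique[OF Mi(1)[OF h] fl, of "A-1"] i1 j1 pA by auto
        then show "x \<in> {(p, A-1)}" using ij by simp
      next
        fix x assume "x \<in> {(p, A-1)}"
        then show "x \<in> M" using g M_def pA A0 by auto
      qed
      then show ?thesis by blast
    qed
  qed
  have "S1 \<subseteq> {(i,j). gext r ys i j}" unfolding S1_def by auto
  then have fS1: "finite S1" using fin_gext[of r ys] by (rule finite_subset)
  have "S2 \<subseteq> {(i,j). gext r zs i j}" unfolding S2_def by auto
  then have fS2: "finite S2" using fin_gext[of r zs] by (rule finite_subset)
  have injsh: "inj_on sh S2" unfolding sh_def inj_on_def by auto
  have cM: "card M = 1" "finite M" using M1 by auto
  have "card {(i,j). gext r X i j} = card S1 + card S2 + 1"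
    unfolding SX using d1 d2 fS1 fS2 cM card_Un_disjoint card_image[OF injsh]
    by (simp add: card_Un_disjoint)
  moreover have "card {(i,j). gext r ys i j} = card S1 + 1" unfolding SY using SY' fS1 by simp
  moreover have "card {(i,j). gext r zs i j} = card S2 + 1" unfolding SZ using SZ' fS2 by simp
  ultimately show ?thesis unfolding X_def by simp
qed

lemma min_gext: "flat_is_min xs i j = gext (\<lambda>a b. b < a) xs i j"
  unfolding flat_is_min_def gext_def by simp

lemma max_gext: "flat_is_max xs i j = gext (\<lambda>a b. a < b) xs i j"
  unfolding flat_is_max_def gext_def by simp

theorem mainTheorem7:
  fixes ys zs :: "'a::linorder list"
  assumes "length ys \<ge> 1" and "length zs \<ge> 1"
  shows "((\<exists>i. flat_is_min ys i (length ys - 1)) \<and> (\<exists>j. flat_is_min zs 0 j)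
           \<longrightarrow> num_minima (ys @ zs) = num_minima ys + num_minima zs - 1)
       \<and> ((\<exists>i. flat_is_max ys i (length ys - 1)) \<and> (\<exists>j. flat_is_max zs 0 j)
           \<longrightarrow> num_maxima (ys @ zs) = num_maxima ys + num_maxima zs - 1)"
proof (intro conjI impI)
  assume "(\<exists>i. flat_is_min ys i (length ys - 1)) \<and> (\<exists>j. flat_is_min zs 0 j)"
  then obtain p q where P: "gext (\<lambda>a b. b < a) ys p (length ys - 1)" and Q: "gext (\<lambda>a b. b < a) zs 0 q"
    unfolding min_gext by blast
  have "card {(i,j). gext (\<lambda>a b. b < a) (ys@zs) i j} = card {(i,j). gext (\<lambda>a b. b < a) ys i j} + card {(i,j). gext (\<lambda>a b. b < a) zs i j} - 1"
    by (rule main_gen[OF _ _ _ assms P Q]) auto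
  then show "num_minima (ys @ zs) = num_minima ys + num_minima zs - 1"
    unfolding num_minima_def min_gext .
next
  assume "(\<exists>i. flat_is_max ys i (length ys - 1)) \<and> (\<exists>j. flat_is_max zs 0 j)"
  then obtain p q where P: "gext (\<lambda>a b. a < b) ys p (length ys - 1)" and Q: "gext (\<lambda>a b. a < b) zs 0 q"
    unfolding max_gext by blast
  have "card {(i,j). gext (\<lambda>a b. a < b) (ys@zs) i j} = card {(i,j). gext (\<lambda>a b. a < b) ys i j} + card {(i,j). gext (\<lambda>a b. a < b) zs i j} - 1"
    by (rule main_gen[OF _ _ _ assms P Q]) auto
  then show "num_maxima (ys @ zs) = num_maxima ys + num_maxima zs - 1"
    unfolding num_maxima_def max_gext .
qed

end
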